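(* Let $\gamma>2$, $\beta_c>0$ and $a=\gamma-1$. For $\mu>0$ define $$R(\mu)=\frac{e^{\beta_c\mu}}{4\sinh^2(a\beta_c\mu/2)}\Big(e^{a\beta_c\mu}F_a(-e^{\beta_c\mu})-2F_a(-1)+e^{-a\beta_c\mu}F_a(-e^{-\beta_c\mu})\Big),$$ where $F_a(w)={}_3F_2(1,a,a;1+a,1+a;w)$. Then $$\lim_{\mu\to\infty}R(\mu)=\left(\frac{\gamma-1}{\gamma-2}\right)^2 .$$ Equivalently, for the Type A model with cut-off $\mu$ at the temperature $T=T_c=1/\beta_c$ (so $\alpha=\gamma-1$), $\dfrac{2L_g}{N(N-1)}\,e^{\beta_c\mu}\to\left(\frac{\gamma-1}{\gamma-2}\right)^2$ as $\mu\to\infty$. *)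

theory Defs
  imports "HOL-Complex_Analysis.Complex_Analysis"
begin

text \<open>Generalized hypergeometric series 3F2(a1,a2,a3; b1,b2; w) as a power series
  (converges for |w| < 1).\<close>
definition hyp3F2_series :: "complex \<Rightarrow> complex \<Rightarrow> complex \<Rightarrow> complex \<Rightarrow> complex \<Rightarrow> complex \<Rightarrow> complex" where
  "hyp3F2_series a1 a2 a3 b1 b2 w =
     (\<Sum>n. pochhammer a1 n * pochhammer a2 n * pochhammer a3 n
            / (pochhammer b1 n * pochhammer b2 n * fact n) * w ^ n)"

text \<open>f is the analytic continuation of F_a(w) = 3F2(1,a,a;1+a,1+a;w) to the cut plane
  C minus [1,oo): holomorphic there and equal to the defining series on the unit disc.\<close>
definition is_F_continuation :: "real \<Rightarrow> (complex \<Rightarrow> complex) \<Rightarrow> bool" where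
  "is_F_continuation a f \<longleftrightarrow>
     f holomorphic_on (- {complex_of_real x | x. x \<ge> 1}) \<and>
     (\<forall>w\<in>ball 0 1. f w = hyp3F2_series 1 (of_real a) (of_real a) (1 + of_real a) (1 + of_real a) w)"

definition R_fun :: "real \<Rightarrow> real \<Rightarrow> (complex \<Rightarrow> complex) \<Rightarrow> real \<Rightarrow> complex" where
  "R_fun a \<beta>c f \<mu> =
     complex_of_real (exp (\<beta>c * \<mu>) / (4 * (sinh (a * \<beta>c * \<mu> / 2))\<^sup>2)) *
     (complex_of_real (exp (a * \<beta>c * \<mu>)) * f (complex_of_real (- exp (\<beta>c * \<mu>)))
      - 2 * f (-1)
      + complex_of_real (exp (- a * \<beta>c * \<mu>)) * f (complex_of_real (- exp (- \<beta>c * \<mu>))))"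

end

theory Submission
  imports Defs
begin

lemma xlog_tendsto:
  fixes c :: real assumes c: "c > 0"
  shows "((\<lambda>x::real. x powr c * ln x) \<longlongrightarrow> 0) (at_right 0)"
proof (rule Lim_null_comparison)
  show "\<forall>\<^sub>F x in at_right 0. norm (x powr c * ln x) \<le> (2/c) * x powr (c/2)"
  proof (rule eventually_at_rightI[of 0 1])
    fix x :: real assume x: "x \<in> {0<..<1}"
    then have x0: "x > 0" and x1: "x < 1" by auto
    have "ln (1/x) \<le> (1/x) powr (c/2) / (c/2)"
      by (rule ln_powr_bound) (use x0 x1 c in auto)
    moreover have "ln (1/x) = - ln x" using x0 by (simp add: ln_div)
    ultimately have A: "- ln x \<le> (1/x) powr (c/2) / (c/2)" by simp
    have B: "(1/x) powr (c/2) / (c/2) = (2/c) * x powr (-(c/2))"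
      using x0 c by (simp add: powr_minus_divide powr_divide)
    have "- ln x \<le> (2/c) * x powr (-(c/2))" using A B by linarith
    then have "x powr c * (- ln x) \<le> x powr c * ((2/c) * x powr (-(c/2)))"
      by (intro mult_left_mono) auto
    also have "\<dots> = (2/c) * x powr (c/2)"
      using x0 by (simp add: powr_add[symmetric])
    finally have "x powr c * (- ln x) \<le> (2/c) * x powr (c/2)" .
    moreover have "ln x \<le> 0" using x0 x1 by simp
    ultimately show "norm (x powr c * ln x) \<le> (2/c) * x powr (c/2)"
      by (simp add: abs_mult mult_nonpos_nonneg abs_of_nonpos)
  qed simp
  show "((\<lambda>x. (2/c) * x powr (c/2)) \<longlongrightarrow> 0) (at_right 0)"
  proof -
    have "((\<lambda>x::real. x powr (c/2)) \<longlongrightarrow> 0) (at_right 0)"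
      by (rule tendsto_zero_powrI[where b="c/2"]) (use c in \<open>auto intro: tendsto_intros eventually_at_rightI[of 0 1]\<close>)
    then show ?thesis using tendsto_mult_right_zero by blast
  qed
qed

lemma cont_on_01:
  fixes f :: "real \<Rightarrow> real"
  assumes "(f \<longlongrightarrow> f 0) (at_right 0)" and "\<And>x. x > 0 \<Longrightarrow> isCont f x"
  shows "continuous_on {0..1} f"
  unfolding continuous_on_eq_continuous_within
proof
  fix x :: real assume x: "x \<in> {0..1}"
  show "continuous (at x within {0..1}) f"
  proof (cases "x = 0")
    case True
    have "at 0 within {0..1} = at_right (0::real)" by (rule at_within_Icc_at_right) simp
    then show ?thesis using True assms(1) by (simp add: continuous_within)
  next
    case False
    then have "x > 0" using x by auto
    then show ?thesis using assms(2) continuous_at_imp_continuous_at_within by blast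
  qed
qed

lemma xlog_cont:
  fixes c :: real assumes c: "c > 0"
  shows "continuous_on {0..1} (\<lambda>x::real. x powr c * ln x)"
  by (rule cont_on_01) (use xlog_tendsto[OF c] in \<open>auto intro!: continuous_intros\<close>)

lemma xpow_cont:
  fixes c :: real assumes c: "c > 0"
  shows "continuous_on {0..1} (\<lambda>x::real. x powr c)"
proof (rule cont_on_01)
  show "((\<lambda>x::real. x powr c) \<longlongrightarrow> 0 powr c) (at_right 0)"
  proof -
    have "\<forall>\<^sub>F x in at_right (0::real). 0 \<le> x"
      using eventually_at_right_less[of "0::real"] by (rule eventually_mono) simp
    then show ?thesis
      using tendsto_zero_powrI[where b=c and f="\<lambda>x. x" and g="\<lambda>_. c" and F="at_right (0::real)"] c
      by (auto intro: tendsto_intros)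
  qed
qed (auto intro!: continuous_intros)

lemma xlog_integral:
  fixes c :: real assumes c: "c > 0"
  shows "((\<lambda>x. x powr (c-1) * ln x) has_integral -(1/c^2)) {0..1}"
proof -
  let ?G = "\<lambda>x::real. x powr c * ln x / c - x powr c / c^2"
  have cont: "continuous_on {0..1} ?G"
    using xlog_cont[OF c] xpow_cont[OF c] c
    by (intro continuous_on_diff continuous_on_divide) (auto intro: continuous_on_const)
  have der: "(?G has_vector_derivative x powr (c-1) * ln x) (at x)" if x: "x \<in> {0<..<1}" for x
  proof -
    from x have x0: "x > 0" by auto
    have "(?G has_real_derivative (c * x powr (c-1) * ln x + x powr c * (1/x)) / c - c * x powr (c-1) / c^2) (at x)"
      using x0 c by (auto intro!: derivative_eq_intros simp: field_simps power2_eq_square)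
    moreover have "(c * x powr (c-1) * ln x + x powr c * (1/x)) / c - c * x powr (c-1) / c^2 = x powr (c-1) * ln x"
    proof -
      have "x powr c * (1/x) = x powr (c-1)" using x0 by (simp add: powr_diff)
      then show ?thesis using c by (simp add: field_simps power2_eq_square)
    qed
    ultimately show ?thesis by (simp add: has_real_derivative_iff_has_vector_derivative)
  qed
  have "((\<lambda>x. x powr (c-1) * ln x) has_integral (?G 1 - ?G 0)) {0..1}"
    by (rule fundamental_theorem_of_calculus_interior[OF _ cont der]) auto
  then show ?thesis by simp
qed

definition phi :: "real \<Rightarrow> real \<Rightarrow> real" where
  "phi a x = x powr (a-1) * ln x"

definition gF :: "real \<Rightarrow> complex \<Rightarrow> complex" where
  "gF a w = - of_real (a^2) * integral {0..1} (\<lambda>x. of_real (phi a x) / (1 - w * of_real x))"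

definition cutS :: "complex set" where
  "cutS = - {complex_of_real x | x. x \<ge> 1}"

lemma phi_cont: "a > 1 \<Longrightarrow> continuous_on {0..1} (phi a)"
  unfolding phi_def by (rule xlog_cont) simp

lemma cutS_nz:
  assumes "w \<in> cutS" "0 \<le> x" "x \<le> 1"
  shows "1 - w * of_real x \<noteq> 0"
proof
  assume h: "1 - w * of_real x = 0"
  then have "x \<noteq> 0" by auto
  with assms have x: "x > 0" by auto
  from h have "w = of_real (1/x)" using x by (simp add: field_simps)
  moreover have "1/x \<ge> 1" using x assms(3) by (simp add: field_simps)
  ultimately show False using assms(1) unfolding cutS_def by auto
qed

lemma cutS_closed: "closed {complex_of_real x | x. x \<ge> 1}"
proof -
  have "{complex_of_real x | x. x \<ge> 1} = {z. Im z = 0} \<inter> {z. Re z \<ge> 1}"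
    by (auto simp: complex_eq_iff intro!: exI[of _ "Re _"])
  moreover have "closed ({z. Im z = 0} \<inter> {z. Re z \<ge> 1})"
    by (intro closed_Int closed_Collect_eq closed_Collect_le continuous_intros)
  ultimately show ?thesis by simp
qed

lemma cutS_open: "open cutS"
  unfolding cutS_def using cutS_closed by (simp add: open_Compl)

lemma cutS_connected: "connected cutS"
proof (rule starlike_imp_connected)
  show "starlike cutS"
    unfolding starlike_def
  proof (intro bexI ballI)
    show "0 \<in> cutS" unfolding cutS_def by auto
    fix w assume w: "w \<in> cutS"
    show "closed_segment 0 w \<subseteq> cutS"
    proof
      fix z assume "z \<in> closed_segment 0 w"
      then obtain u :: real where u: "0 \<le> u" "u \<le> 1" "z = u *\<^sub>R w"
        by (auto simp: closed_segment_def)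
      show "z \<in> cutS"
      proof (rule ccontr)
        assume "z \<notin> cutS"
        then obtain x where x: "x \<ge> 1" "z = of_real x" unfolding cutS_def by auto
        then have "u \<noteq> 0" using u by auto
        then have u0: "u > 0" using u by auto
        have "w = of_real (x / u)" using x u u0
          by (simp add: scaleR_conv_of_real field_simps)
        moreover have "x / u \<ge> 1" using x u u0 by (simp add: field_simps)
        ultimately show False using w unfolding cutS_def by auto
      qed
    qed
  qed
qed

lemma ball_sub_cutS: "ball 0 1 \<subseteq> cutS"
  unfolding cutS_def by auto

lemma gF_holo:
  assumes a: "a > 1"
  shows "gF a holomorphic_on cutS"
proof -
  let ?I = "\<lambda>w. integral (cbox 0 1) (\<lambda>x. of_real (phi a x) / (1 - w * of_real x))"
  have "?I field_differentiable at w0" if w0: "w0 \<in> cutS" for w0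
  proof -
    obtain r where r: "r > 0" "ball w0 r \<subseteq> cutS"
      using cutS_open w0 open_contains_ball by blast
    have "?I holomorphic_on ball w0 r"
    proof (rule leibniz_rule_holomorphic[where fx = "\<lambda>w x. of_real (phi a x) * of_real x / (1 - w * of_real x)^2"])
      fix w x assume w: "w \<in> ball w0 r" and x: "(x::real) \<in> cbox 0 1"
      have nz: "1 - w * of_real x \<noteq> 0" using cutS_nz[of w x] w x r by (auto simp: cbox_interval)
      show "((\<lambda>w. of_real (phi a x) / (1 - w * of_real x)) has_field_derivative
              of_real (phi a x) * of_real x / (1 - w * of_real x)^2) (at w within ball w0 r)"
        using nz by (auto intro!: derivative_eq_intros simp: field_simps power2_eq_square)
    next
      fix w assume w: "w \<in> ball w0 r"
      have "continuous_on (cbox 0 1) (\<lambda>x. of_real (phi a x) / (1 - w * of_real x))"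
        unfolding cbox_interval
        using cutS_nz[of w] w r phi_cont[OF a]
        by (auto intro!: continuous_intros continuous_on_compose2[OF continuous_on_of_real phi_cont[OF a]])
      then show "(\<lambda>x. of_real (phi a x) / (1 - w * of_real x)) integrable_on cbox 0 1"
        by (rule integrable_continuous)
    next
      have c1: "continuous_on (ball w0 r \<times> cbox 0 1) (\<lambda>p. complex_of_real (phi a (snd p)))"
        by (rule continuous_on_compose2[OF continuous_on_of_real
              continuous_on_compose2[OF phi_cont[OF a] continuous_on_snd]]) (auto simp: cbox_interval)
      have "continuous_on (ball w0 r \<times> cbox 0 1)
              (\<lambda>p. complex_of_real (phi a (snd p)) * of_real (snd p) / (1 - fst p * of_real (snd p))^2)"
        using r cutS_nz
        by (intro continuous_intros c1) (auto simp: cbox_interval)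
      then show "continuous_on (ball w0 r \<times> cbox 0 1)
              (\<lambda>(w, x). complex_of_real (phi a x) * of_real x / (1 - w * of_real x)^2)"
        by (simp add: case_prod_beta)
    qed (rule convex_ball)
    then show ?thesis
      using r by (auto intro: holomorphic_on_imp_differentiable_at)
  qed
  then have "?I holomorphic_on cutS"
    by (simp add: holomorphic_on_def field_differentiable_at_within)
  then show ?thesis
    unfolding gF_def cbox_interval[symmetric] by (intro holomorphic_intros)
qed

lemma poch_ratio:
  assumes a: "a > 0"
  shows "pochhammer (complex_of_real a) n / pochhammer (1 + of_real a) n = of_real (a / (a + real n))"
proof -
  have nz: "pochhammer (1 + complex_of_real a) n \<noteq> 0"
  proof
    assume "pochhammer (1 + complex_of_real a) n = 0"
    then obtain k where "1 + complex_of_real a = - of_nat k" by (auto simp: pochhammer_eq_0_iff)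
    then have "Re (1 + complex_of_real a) = Re (- of_nat k)" by simp
    then show False using a by simp
  qed
  have "pochhammer (complex_of_real a) n * (of_real a + of_nat n) = of_real a * pochhammer (1 + of_real a) n"
    using pochhammer_Suc[of "complex_of_real a" n] pochhammer_rec[of "complex_of_real a" n]
    by (simp add: add.commute)
  moreover have "complex_of_real a + of_nat n \<noteq> 0"
  proof
    assume "complex_of_real a + of_nat n = 0"
    then have "Re (complex_of_real a + of_nat n) = 0" by simp
    then show False using a by simp
  qed
  ultimately show ?thesis using nz
    by (simp add: field_simps)
qed

lemma hyp_term:
  assumes a: "a > 0"
  shows "pochhammer 1 n * pochhammer (complex_of_real a) n * pochhammer (complex_of_real a) n
          / (pochhammer (1 + of_real a) n * pochhammer (1 + of_real a) n * fact n) * w ^ n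
        = of_real (a^2 / (real n + a)^2) * w ^ n"
proof -
  have "pochhammer 1 n * pochhammer (complex_of_real a) n * pochhammer (complex_of_real a) n
          / (pochhammer (1 + of_real a) n * pochhammer (1 + of_real a) n * fact n)
        = (pochhammer (complex_of_real a) n / pochhammer (1 + of_real a) n) *
          (pochhammer (complex_of_real a) n / pochhammer (1 + of_real a) n) * (fact n / fact n)"
    by (simp add: pochhammer_fact[symmetric])
  also have "\<dots> = of_real (a / (a + real n)) * of_real (a / (a + real n))"
    by (simp add: poch_ratio[OF a])
  also have "\<dots> = of_real (a^2 / (real n + a)^2)"
    by (simp add: power2_eq_square add.commute)
  finally show ?thesis by simp
qed

lemma gF_sums:
  assumes a: "a > 1" and w: "w \<in> ball 0 1"
  shows "(\<lambda>n. of_real (a^2 / (real n + a)^2) * w ^ n) sums gF a w"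
proof -
  have nw: "norm w < 1" using w by simp
  define f where "f = (\<lambda>N x. complex_of_real (phi a x) * (\<Sum>n<N. (w * of_real x) ^ n))"
  define h where "h = (\<lambda>x. \<bar>phi a x\<bar> / (1 - norm w))"
  define lim where "lim = (\<lambda>x. complex_of_real (phi a x) / (1 - w * of_real x))"
  have fint: "(f N has_integral (\<Sum>n<N. w ^ n * of_real (-(1 / (real n + a)^2)))) {0..1}" for N
  proof -
    have "((\<lambda>x. \<Sum>n<N. w ^ n * of_real (x powr ((real n + a) - 1) * ln x))
            has_integral (\<Sum>n<N. w ^ n * of_real (-(1 / (real n + a)^2)))) {0..1}"
    proof (rule has_integral_sum)
      fix n assume "n \<in> {..<N}"
      have "((\<lambda>x. x powr ((real n + a) - 1) * ln x) has_integral -(1 / (real n + a)^2)) {0..1}"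
        by (rule xlog_integral) (use a in simp)
      from has_integral_scaleR_left[OF this, of "1::complex"]
      have "((\<lambda>x. complex_of_real (x powr ((real n + a) - 1) * ln x)) has_integral
              of_real (-(1 / (real n + a)^2))) {0..1}"
        by (simp only: of_real_def)
      from has_integral_mult_right[OF this, of "w^n"]
      show "((\<lambda>x. w ^ n * of_real (x powr ((real n + a) - 1) * ln x)) has_integral
              w ^ n * of_real (-(1 / (real n + a)^2))) {0..1}" .
    qed simp
    moreover have "(\<Sum>n<N. w ^ n * of_real (x powr ((real n + a) - 1) * ln x)) = f N x"
      if x: "x \<in> {0..1}" for x
    proof -
      have "x powr ((real n + a) - 1) = x ^ n * x powr (a - 1)" for n
      proof (cases "x = 0")
        case True then show ?thesis by simp
      next
        case False then have "x > 0" using x by auto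
        then show ?thesis by (simp add: powr_add[symmetric] powr_realpow[symmetric] algebra_simps)
      qed
      then show ?thesis
        unfolding f_def phi_def by (simp add: sum_distrib_left power_mult_distrib algebra_simps)
    qed
    ultimately show ?thesis by (rule has_integral_eq[rotated])
  qed
  have "(\<lambda>N. integral {0..1} (f N)) \<longlonglongrightarrow> integral {0..1} lim"
  proof (rule dominated_convergence(2))
    show "f N integrable_on {0..1}" for N using fint by blast
    show "h integrable_on {0..1}"
      unfolding h_def
      by (rule integrable_continuous_interval) (use phi_cont[OF a] nw in \<open>auto intro!: continuous_intros\<close>)
    fix N x assume x: "(x::real) \<in> {0..1}"
    have "norm (\<Sum>n<N. (w * of_real x) ^ n) \<le> (\<Sum>n<N. norm w ^ n)"
    proof -
      have "norm (\<Sum>n<N. (w * of_real x) ^ n) \<le> (\<Sum>n<N. norm ((w * of_real x) ^ n))"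
        by (rule norm_sum)
      also have "\<dots> \<le> (\<Sum>n<N. norm w ^ n)"
        using x by (intro sum_mono) (auto simp: norm_mult norm_power power_mult_distrib
            intro!: mult_left_le power_le_one)
      finally show ?thesis .
    qed
    also have "\<dots> = (1 - norm w ^ N) / (1 - norm w)"
      using nw by (simp add: sum_gp_strict)
    also have "\<dots> \<le> 1 / (1 - norm w)"
      using nw by (intro divide_right_mono) auto
    finally have "norm (\<Sum>n<N. (w * of_real x) ^ n) \<le> 1 / (1 - norm w)" .
    then show "norm (f N x) \<le> h x"
      unfolding f_def h_def norm_mult
      by (auto intro: mult_left_mono simp: divide_inverse)
  next
    fix x assume x: "(x::real) \<in> {0..1}"
    have "norm (w * of_real x) < 1"
    proof -
      have "norm (w * of_real x) = norm w * \<bar>x\<bar>" by (simp add: norm_mult)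
      also have "\<dots> \<le> norm w" using x by (auto intro: mult_left_le)
      finally show ?thesis using nw by simp
    qed
    from geometric_sums[OF this]
    have G: "(\<lambda>N. \<Sum>n<N. (w * of_real x) ^ n) \<longlonglongrightarrow> 1 / (1 - w * of_real x)"
      by (simp add: sums_def)
    show "(\<lambda>N. f N x) \<longlonglongrightarrow> lim x"
      using tendsto_mult_left[OF G, of "complex_of_real (phi a x)"] unfolding f_def lim_def by simp
  qed
  then have "(\<lambda>N. \<Sum>n<N. w ^ n * of_real (-(1 / (real n + a)^2))) \<longlonglongrightarrow> integral {0..1} lim"
    by (simp only: integral_unique[OF fint])
  then have "(\<lambda>N. - of_real (a^2) * (\<Sum>n<N. w ^ n * of_real (-(1 / (real n + a)^2)))) \<longlonglongrightarrow> gF a w"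
    unfolding gF_def lim_def by (rule tendsto_mult_left)
  moreover have "- of_real (a^2) * (\<Sum>n<N. w ^ n * of_real (-(1 / (real n + a)^2)))
      = (\<Sum>n<N. of_real (a^2 / (real n + a)^2) * w ^ n)" for N
    by (simp add: sum_distrib_left algebra_simps)
  ultimately show ?thesis by (simp add: sums_def)
qed

lemma gF_hyp:
  assumes a: "a > 1" and w: "w \<in> ball 0 1"
  shows "gF a w = hyp3F2_series 1 (of_real a) (of_real a) (1 + of_real a) (1 + of_real a) w"
proof -
  have "(\<lambda>n. pochhammer 1 n * pochhammer (complex_of_real a) n * pochhammer (complex_of_real a) n
          / (pochhammer (1 + of_real a) n * pochhammer (1 + of_real a) n * fact n) * w ^ n)
        = (\<lambda>n. of_real (a^2 / (real n + a)^2) * w ^ n)"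
    by (rule ext, rule hyp_term) (use a in simp)
  then show ?thesis
    unfolding hyp3F2_series_def using sums_unique[OF gF_sums[OF a w]] by simp
qed

lemma gF_unique:
  assumes a: "a > 1" and f: "is_F_continuation a f" and w: "w \<in> cutS"
  shows "f w = gF a w"
proof -
  have "(\<lambda>z. f z - gF a z) w = 0"
  proof (rule analytic_continuation[where f = "\<lambda>z. f z - gF a z" and S = cutS and U = "ball 0 1" and \<xi> = 0])
    show "(\<lambda>z. f z - gF a z) holomorphic_on cutS"
      using f gF_holo[OF a] unfolding is_F_continuation_def cutS_def
      by (intro holomorphic_intros) auto
    show "0 islimpt ball (0::complex) 1" by (simp add: islimpt_ball)
    fix z assume "z \<in> ball (0::complex) 1"
    then show "f z - gF a z = 0"
      using f gF_hyp[OF a] unfolding is_F_continuation_def by auto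
  qed (use cutS_open cutS_connected ball_sub_cutS w in \<open>auto simp: cutS_def\<close>)
  then show ?thesis by simp
qed

lemma gF_exists:
  assumes a: "a > 1"
  shows "is_F_continuation a (gF a)"
  unfolding is_F_continuation_def
  using gF_holo[OF a] gF_hyp[OF a] by (auto simp: cutS_def)

definition G :: "real \<Rightarrow> real \<Rightarrow> real" where
  "G a y = -(a^2) * integral {0..1} (\<lambda>x. phi a x / (1 + y * x))"

lemma phi_nonpos: "0 \<le> x \<Longrightarrow> x \<le> 1 \<Longrightarrow> phi a x \<le> 0"
  unfolding phi_def by (cases "x = 0") (auto intro: mult_nonneg_nonpos)

lemma int_real:
  assumes a: "a > 1" and y: "y \<ge> 0"
  shows "((\<lambda>x. phi a x / (1 + y * x)) has_integral integral {0..1} (\<lambda>x. phi a x / (1 + y * x))) {0..1}"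
proof -
  have "continuous_on {0..1} (\<lambda>x. phi a x / (1 + y * x))"
  proof -
    have "1 + y * x \<noteq> 0" if "0 \<le> x" for x using y that
      by (smt (verit) mult_nonneg_nonneg)
    then show ?thesis using phi_cont[OF a] by (intro continuous_intros) auto
  qed
  then show ?thesis by (intro integrable_integral integrable_continuous_interval)
qed

lemma gF_real:
  assumes a: "a > 1" and y: "y \<ge> 0"
  shows "gF a (of_real (-y)) = of_real (G a y)"
proof -
  have "((\<lambda>x. complex_of_real (phi a x / (1 + y * x))) has_integral
          of_real (integral {0..1} (\<lambda>x. phi a x / (1 + y * x)))) {0..1}"
    using has_integral_scaleR_left[OF int_real[OF a y], of "1::complex"] by (simp only: of_real_def)
  moreover have "(\<lambda>x. complex_of_real (phi a x / (1 + y * x))) =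
      (\<lambda>x. of_real (phi a x) / (1 - of_real (-y) * of_real x))"
    by (simp add: of_real_divide)
  ultimately show ?thesis
    unfolding gF_def G_def by (simp add: integral_unique)
qed

lemma G_bound:
  assumes a: "a > 1" and y: "y \<ge> 0"
  shows "\<bar>G a y\<bar> \<le> 1"
proof -
  have i2: "((\<lambda>x. - phi a x) has_integral 1 / a^2) {0..1}"
    using has_integral_neg[OF xlog_integral[of a]] a unfolding phi_def by simp
  have "norm (integral {0..1} (\<lambda>x. phi a x / (1 + y * x))) \<le> integral {0..1} (\<lambda>x. - phi a x)"
  proof (rule integral_norm_bound_integral)
    show "(\<lambda>x. phi a x / (1 + y * x)) integrable_on {0..1}" using int_real[OF a y] by blast
    show "(\<lambda>x. - phi a x) integrable_on {0..1}" using i2 by blast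
    fix x :: real assume x: "x \<in> {0..1}"
    have p: "phi a x \<le> 0" using phi_nonpos x by auto
    have d: "1 + y * x \<ge> 1" using x y by auto
    have "\<bar>phi a x\<bar> / (1 + y * x) \<le> \<bar>phi a x\<bar>"
      using d by (simp add: divide_le_eq mult_le_cancel_left1 mult_le_cancel_left)
    then show "norm (phi a x / (1 + y * x)) \<le> - phi a x"
      using p d by (simp add: abs_divide)
  qed
  also have "\<dots> = 1 / a^2" using i2 by (rule integral_unique)
  finally have "\<bar>integral {0..1} (\<lambda>x. phi a x / (1 + y * x))\<bar> \<le> 1 / a^2" by simp
  then have "a^2 * \<bar>integral {0..1} (\<lambda>x. phi a x / (1 + y * x))\<bar> \<le> a^2 * (1 / a^2)"
    by (intro mult_left_mono) auto
  then show ?thesis using a unfolding G_def by (simp add: abs_mult)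
qed

lemma H_lim:
  assumes a: "a > 1"
  shows "((\<lambda>y. y * G a y) \<longlongrightarrow> a^2 / (a-1)^2) at_top"
proof -
  define K where "K = (\<lambda>y. -(a^2) * integral {0..1} (\<lambda>x. phi a x * (max y 1 / (1 + max y 1 * x))))"
  define gl where "gl = (\<lambda>x::real. x powr (a-2) * ln x)"
  have gl_int: "(gl has_integral -(1/(a-1)^2)) {0..1}"
    using xlog_integral[of "a-1"] a unfolding gl_def by (simp add: algebra_simps)
  have KL: "(K \<longlongrightarrow> a^2 / (a-1)^2) at_top"
  proof (rule tendsto_at_topI_sequentially)
    fix X :: "nat \<Rightarrow> real" assume X: "filterlim X at_top sequentially"
    define Y where "Y = (\<lambda>n. max (X n) 1)"
    have Y1: "Y n \<ge> 1" for n unfolding Y_def by simp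
    have Ytop: "filterlim Y at_top sequentially"
      by (rule filterlim_at_top_mono[OF X]) (auto simp: Y_def)
    define f where "f = (\<lambda>n x. phi a x * (Y n / (1 + Y n * x)))"
    have nz: "1 + Y n * x > 0" if "x \<ge> 0" for n x
      using Y1[of n] that by (smt (verit) mult_nonneg_nonneg)
    have "(\<lambda>n. integral {0..1} (f n)) \<longlonglongrightarrow> integral {0..1} gl"
    proof (rule dominated_convergence(2)[where h = "\<lambda>x. - gl x"])
      fix n
      have "continuous_on {0..1} (f n)"
      proof -
        have "1 + Y n * x \<noteq> 0" if "x \<in> {0..1}" for x using nz[of x n] that by auto
        then show ?thesis unfolding f_def using phi_cont[OF a]
          by (intro continuous_intros) auto
      qed
      then show "f n integrable_on {0..1}" by (rule integrable_continuous_interval)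
    next
      show "(\<lambda>x. - gl x) integrable_on {0..1}" using has_integral_neg[OF gl_int] by blast
    next
      fix n x assume x: "(x::real) \<in> {0..1}"
      show "norm (f n x) \<le> - gl x"
      proof (cases "x = 0")
        case True then show ?thesis by (simp add: f_def gl_def phi_def)
      next
        case False
        then have x0: "x > 0" and x1: "x \<le> 1" using x by auto
        define q where "q = x powr (a-2) * (- ln x)"
        have q0: "q \<ge> 0" unfolding q_def using x0 x1 by (intro mult_nonneg_nonneg) auto
        have ph: "phi a x = - (x * q)"
          unfolding phi_def q_def using x0 by (simp add: powr_diff powr_add[symmetric] field_simps power2_eq_square)
        have r: "x * (Y n / (1 + Y n * x)) \<le> 1"
          using nz[of x n] x0 by (simp add: field_simps)
        have r0: "x * (Y n / (1 + Y n * x)) \<ge> 0"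
          using nz[of x n] x0 Y1[of n] by simp
        have "norm (f n x) = q * (x * (Y n / (1 + Y n * x)))"
          unfolding f_def ph using q0 r0 x0 Y1[of n] nz[of x n] by (simp add: abs_mult algebra_simps)
        also have "\<dots> \<le> q" by (rule mult_left_le[OF r q0])
        also have "q = - gl x" unfolding q_def gl_def by simp
        finally show ?thesis .
      qed
    next
      fix x assume x: "(x::real) \<in> {0..1}"
      show "(\<lambda>n. f n x) \<longlonglongrightarrow> gl x"
      proof (cases "x = 0")
        case True then show ?thesis by (simp add: f_def gl_def phi_def)
      next
        case False
        then have x0: "x > 0" using x by auto
        have iv: "(\<lambda>n. inverse (Y n)) \<longlonglongrightarrow> 0" by (rule tendsto_inverse_0_at_top[OF Ytop])
        have "(\<lambda>n. 1 / (inverse (Y n) + x)) \<longlonglongrightarrow> 1 / (0 + x)"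
          using x0 by (intro tendsto_intros iv) auto
        moreover have "1 / (inverse (Y n) + x) = Y n / (1 + Y n * x)" for n
          using Y1[of n] x0 by (simp add: field_simps)
        ultimately have "(\<lambda>n. Y n / (1 + Y n * x)) \<longlonglongrightarrow> 1 / x" by simp
        then have "(\<lambda>n. phi a x * (Y n / (1 + Y n * x))) \<longlonglongrightarrow> phi a x * (1 / x)"
          by (rule tendsto_mult_left)
        moreover have "phi a x * (1 / x) = gl x"
          unfolding phi_def gl_def using x0 by (simp add: powr_diff field_simps power2_eq_square)
        ultimately show ?thesis unfolding f_def by simp
      qed
    qed
    then have "(\<lambda>n. -(a^2) * integral {0..1} (f n)) \<longlonglongrightarrow> -(a^2) * integral {0..1} gl"
      by (rule tendsto_mult_left)
    then have "(\<lambda>n. -(a^2) * integral {0..1} (f n)) \<longlonglongrightarrow> -(a^2) * (-(1/(a-1)^2))"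
      by (simp only: integral_unique[OF gl_int])
    moreover have "K (X n) = -(a^2) * integral {0..1} (f n)" for n
      unfolding K_def f_def Y_def ..
    ultimately show "(\<lambda>n. K (X n)) \<longlonglongrightarrow> a^2 / (a-1)^2" by simp
  qed
  have ev: "\<forall>\<^sub>F y in at_top. K y = y * G a y"
  proof (rule eventually_mono[OF eventually_ge_at_top[of 1]])
    fix y :: real assume y: "y \<ge> 1"
    have "y * G a y = -(a^2) * (y * integral {0..1} (\<lambda>x. phi a x / (1 + y * x)))"
      unfolding G_def by simp
    also have "y * integral {0..1} (\<lambda>x. phi a x / (1 + y * x)) =
        integral {0..1} (\<lambda>x. y * (phi a x / (1 + y * x)))" by (rule integral_mult_right[symmetric])
    finally show "K y = y * G a y"
      unfolding K_def using y by (simp add: max_def algebra_simps)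
  qed
  show ?thesis using KL tendsto_cong[OF ev] by simp
qed

lemma sinh_sq: "4 * sinh (t/2)^2 = exp t - 2 + exp (-t)" for t :: real
proof -
  define A where "A = exp (t/2)"
  have A0: "A > 0" unfolding A_def by simp
  have e1: "exp t = A * A" unfolding A_def by (simp add: exp_add[symmetric])
  have e2: "exp (-(t/2)) = 1 / A" unfolding A_def by (simp add: exp_minus field_simps)
  have e3: "exp (-t) = 1 / (A * A)" using e1 by (simp add: exp_minus inverse_eq_divide)
  show ?thesis
    unfolding sinh_field_def e1 e2 e3 A_def[symmetric] using A0
    by (simp add: field_simps power2_eq_square)
qed

lemma exp_neg_lim: "c > 0 \<Longrightarrow> ((\<lambda>s::real. exp (-(c * s))) \<longlongrightarrow> 0) at_top"
proof -
  assume c: "c > 0"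
  have "filterlim (\<lambda>s::real. c * s) at_top at_top"
    using filterlim_tendsto_pos_mult_at_top[OF tendsto_const c filterlim_ident] .
  then have "filterlim (\<lambda>s::real. exp (c * s)) at_top at_top"
    by (rule filterlim_compose[OF exp_at_top])
  then have "((\<lambda>s. inverse (exp (c * s))) \<longlongrightarrow> 0) at_top"
    by (rule tendsto_inverse_0_at_top)
  then show ?thesis by (simp add: exp_minus)
qed

lemma alg_id:
  fixes es E G1 G0 G2 :: real
  assumes E: "E > 1"
  shows "es / (E - 2 + 1/E) * (E * G1 - 2 * G0 + (1/E) * G2)
       = (es * G1 - 2 * G0 * (es / E) + (es / E^2) * G2) / (1 - 1/E)^2"
proof -
  have "E - 2 + 1/E = (E - 1)^2 / E" using E by (simp add: field_simps power2_eq_square)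
  moreover have "1 - 1/E = (E - 1) / E" using E by (simp add: field_simps)
  ultimately have "?thesis \<longleftrightarrow> es / ((E - 1)^2 / E) * (E * G1 - 2 * G0 + (1/E) * G2)
       = (es * G1 - 2 * G0 * (es / E) + (es / E^2) * G2) / ((E - 1) / E)^2" by simp
  also have "\<dots> \<longleftrightarrow> True"
  proof -
    have "E - 1 \<noteq> 0" "E \<noteq> 0" using E by auto
    then show ?thesis by (simp add: field_simps; algebra)
  qed
  finally show ?thesis by simp
qed

definition Q :: "real \<Rightarrow> real \<Rightarrow> real" where
  "Q a s = exp s / (4 * (sinh (a * s / 2))\<^sup>2) *
     (exp (a * s) * G a (exp s) - 2 * G a 1 + exp (- a * s) * G a (exp (- s)))"

lemma Q_lim:
  assumes a: "a > 1"
  shows "(Q a \<longlongrightarrow> a^2 / (a-1)^2) at_top"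
proof -
  define RHS where "RHS = (\<lambda>s. (exp s * G a (exp s) - 2 * G a 1 * exp (-((a-1) * s))
        + exp (-((2*a-1) * s)) * G a (exp (-s))) / (1 - exp (-(a * s)))^2)"
  have ev: "\<forall>\<^sub>F s in at_top. RHS s = Q a s"
  proof (rule eventually_mono[OF eventually_gt_at_top[of 0]])
    fix s :: real assume s: "s > 0"
    define E where "E = exp (a * s)"
    have E1: "E > 1" unfolding E_def using a s by simp
    have h1: "4 * (sinh (a * s / 2))\<^sup>2 = E - 2 + 1/E"
      using sinh_sq[of "a * s"] unfolding E_def by (simp add: exp_minus inverse_eq_divide)
    have h2: "exp (- a * s) = 1/E" "exp (-(a * s)) = 1/E" unfolding E_def by (simp_all add: exp_minus inverse_eq_divide)
    have h3: "exp (-((a-1) * s)) = exp s / E"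
      unfolding E_def by (simp add: exp_minus exp_diff[symmetric] algebra_simps)
    have h4: "exp (-((2*a-1) * s)) = exp s / E^2"
    proof -
      have "exp s / E^2 = exp s / exp (2 * (a * s))" unfolding E_def by (simp add: exp_add[symmetric] power2_eq_square)
      also have "\<dots> = exp (s - 2 * (a * s))" by (simp add: exp_diff)
      finally show ?thesis by (simp add: algebra_simps)
    qed
    show "RHS s = Q a s"
      unfolding RHS_def Q_def h1 h2 h3 h4 E_def[symmetric]
      using alg_id[OF E1, of "exp s" "G a (exp s)" "G a 1" "G a (exp (-s))"] by simp
  qed
  have t1: "((\<lambda>s. exp s * G a (exp s)) \<longlongrightarrow> a^2/(a-1)^2) at_top"
    using filterlim_compose[OF H_lim[OF a] exp_at_top] by (simp add: o_def)
  have t2: "((\<lambda>s. exp (-((a-1) * s))) \<longlongrightarrow> 0) at_top" by (rule exp_neg_lim) (use a in simp)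
  have t3: "((\<lambda>s. exp (-((2*a-1) * s)) * G a (exp (-s))) \<longlongrightarrow> 0) at_top"
  proof (rule Lim_null_comparison)
    show "\<forall>\<^sub>F s in at_top. norm (exp (-((2*a-1) * s)) * G a (exp (-s))) \<le> exp (-((2*a-1) * s))"
    proof (rule always_eventually, rule allI)
      fix s :: real
      have "\<bar>G a (exp (-s))\<bar> \<le> 1" by (rule G_bound) (use a in auto)
      then show "norm (exp (-((2*a-1) * s)) * G a (exp (-s))) \<le> exp (-((2*a-1) * s))"
        by (simp add: abs_mult mult_left_le)
    qed
    show "((\<lambda>s. exp (-((2*a-1) * s))) \<longlongrightarrow> 0) at_top" by (rule exp_neg_lim) (use a in simp)
  qed
  have t4: "((\<lambda>s. exp (-(a * s))) \<longlongrightarrow> 0) at_top" by (rule exp_neg_lim) (use a in simp)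
  have "(RHS \<longlongrightarrow> (a^2/(a-1)^2 - 2 * G a 1 * 0 + 0) / (1 - 0)^2) at_top"
    unfolding RHS_def by (intro tendsto_intros t1 t2 t3 t4) simp
  then have "(RHS \<longlongrightarrow> a^2/(a-1)^2) at_top" by simp
  then show ?thesis using tendsto_cong[OF ev] by simp
qed

lemma neg_in_cutS: "y \<ge> 0 \<Longrightarrow> complex_of_real (-y) \<in> cutS"
  unfolding cutS_def by auto

theorem mainTheorem6:
  fixes \<gamma> \<beta>c a :: real
  assumes "\<gamma> > 2" and "\<beta>c > 0" and "a = \<gamma> - 1"
  shows "(\<exists>f. is_F_continuation a f) \<and>
         (\<forall>f. is_F_continuation a f \<longrightarrow>
            (R_fun a \<beta>c f \<longlongrightarrow> complex_of_real (((\<gamma> - 1) / (\<gamma> - 2))\<^sup>2)) at_top)"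
proof (intro conjI allI impI)
  have a: "a > 1" using assms by simp
  show "\<exists>f. is_F_continuation a f" using gF_exists[OF a] by blast
  fix f assume f: "is_F_continuation a f"
  have fv: "f (complex_of_real (-y)) = complex_of_real (G a y)" if "y \<ge> 0" for y
    using gF_unique[OF a f neg_in_cutS[OF that]] gF_real[OF a that] by simp
  have fv': "f (- complex_of_real y) = complex_of_real (G a y)" if "y \<ge> 0" for y
    using fv[OF that] by simp
  have fm1: "f (-1) = complex_of_real (G a 1)" using fv[of 1] by simp
  have R: "R_fun a \<beta>c f \<mu> = complex_of_real (Q a (\<beta>c * \<mu>))" for \<mu>
  proof -
    have "R_fun a \<beta>c f \<mu> = complex_of_real (exp (\<beta>c * \<mu>) / (4 * (sinh (a * (\<beta>c * \<mu>) / 2))\<^sup>2)) *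
     (complex_of_real (exp (a * (\<beta>c * \<mu>))) * complex_of_real (G a (exp (\<beta>c * \<mu>)))
      - 2 * complex_of_real (G a 1)
      + complex_of_real (exp (- a * (\<beta>c * \<mu>))) * complex_of_real (G a (exp (- (\<beta>c * \<mu>)))))"
      unfolding R_fun_def fm1 by (simp add: fv' mult.assoc)
    also have "\<dots> = complex_of_real (Q a (\<beta>c * \<mu>))"
      unfolding Q_def by simp
    finally show ?thesis .
  qed
  have lim: "a^2 / (a-1)^2 = ((\<gamma> - 1) / (\<gamma> - 2))\<^sup>2"
    using assms by (simp add: power_divide)
  have "filterlim (\<lambda>\<mu>::real. \<beta>c * \<mu>) at_top at_top"
    using filterlim_tendsto_pos_mult_at_top[OF tendsto_const assms(2) filterlim_ident] .
  from filterlim_compose[OF Q_lim[OF a] this]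
  have "((\<lambda>\<mu>. Q a (\<beta>c * \<mu>)) \<longlongrightarrow> ((\<gamma> - 1) / (\<gamma> - 2))\<^sup>2) at_top"
    using lim by simp
  then have "((\<lambda>\<mu>. complex_of_real (Q a (\<beta>c * \<mu>))) \<longlongrightarrow> complex_of_real (((\<gamma> - 1) / (\<gamma> - 2))\<^sup>2)) at_top"
    by (rule tendsto_of_real)
  moreover have "R_fun a \<beta>c f = (\<lambda>\<mu>. complex_of_real (Q a (\<beta>c * \<mu>)))"
    using R by (intro ext)
  ultimately show "(R_fun a \<beta>c f \<longlongrightarrow> complex_of_real (((\<gamma> - 1) / (\<gamma> - 2))\<^sup>2)) at_top"
    by (simp only:)
qed

end
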